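(* Let $(G_i)_{i\in I}$ be a finite collection of groups. For $J\subset I$ put $G_J=\prod_{i\in J}G_i$ and let $p_J\colon G_I\to G_J$ be the projection, with induced ring homomorphism $\mathbb Zp_J\colon\mathbb ZG_I\to\mathbb ZG_J$. Then for every $s\in\mathbb N$, $$\bigcap_{J\subset I,\ \#J<s}\ker(\mathbb Zp_J)\subset\Delta(G_I)^s.$$
   Context: For a group $G$, $\mathbb ZG$ is the integral group ring, $\Delta(G)$ its augmentation ideal (kernel of the map sending each group element to $1$), $\Delta(G)^0=\mathbb ZG$ and $\Delta(G)^s$ its $s$-th power. An empty intersection of subsets of $\mathbb ZG_I$ is $\mathbb ZG_I$. *)

theory Defs
  imports "HOL-Algebra.Algebra"
begin

definition fsupp :: "('a \<Rightarrow> int) \<Rightarrow> 'a set" where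
  "fsupp f = {x. f x \<noteq> 0}"

definition group_ring :: "('a, 'b) monoid_scheme \<Rightarrow> ('a \<Rightarrow> int) ring" where
  "group_ring G = \<lparr> carrier = {f. finite (fsupp f) \<and> fsupp f \<subseteq> carrier G},
     monoid.mult = (\<lambda>f h. \<lambda>x. if x \<in> carrier G
                         then (\<Sum>y\<in>fsupp f. f y * h (inv\<^bsub>G\<^esub> y \<otimes>\<^bsub>G\<^esub> x)) else 0),
     one = (\<lambda>x. if x = \<one>\<^bsub>G\<^esub> then 1 else 0),
     ring.zero = (\<lambda>x. 0),
     ring.add = (\<lambda>f h. \<lambda>x. f x + h x) \<rparr>"

definition augmentation :: "('a \<Rightarrow> int) \<Rightarrow> int" where
  "augmentation f = (\<Sum>x\<in>fsupp f. f x)"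

definition aug_ideal :: "('a, 'b) monoid_scheme \<Rightarrow> ('a \<Rightarrow> int) set" where
  "aug_ideal G = {f \<in> carrier (group_ring G). augmentation f = 0}"

fun ideal_pow :: "('a, 'b) ring_scheme \<Rightarrow> 'a set \<Rightarrow> nat \<Rightarrow> 'a set" where
  "ideal_pow R D 0 = carrier R"
| "ideal_pow R D (Suc s) = ideal_prod R (ideal_pow R D s) D"

definition induced_map :: "('a \<Rightarrow> 'c) \<Rightarrow> ('a \<Rightarrow> int) \<Rightarrow> ('c \<Rightarrow> int)" where
  "induced_map p f = (\<lambda>y. \<Sum>x\<in>{x \<in> fsupp f. p x = y}. f x)"

definition proj :: "'i set \<Rightarrow> ('i \<Rightarrow> 'g) \<Rightarrow> ('i \<Rightarrow> 'g)" where
  "proj J x = restrict x J"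

end

theory Submission
  imports Defs "HOL-Library.Function_Algebras"
begin

definition extp :: "'i set \<Rightarrow> ('i \<Rightarrow> ('g, 'b) monoid_scheme) \<Rightarrow> 'i set \<Rightarrow> ('i \<Rightarrow> 'g) \<Rightarrow> ('i \<Rightarrow> 'g)" where
  "extp I G L g = (\<lambda>i\<in>I. if i \<in> L then g i else \<one>\<^bsub>G i\<^esub>)"

definition UU :: "'i set \<Rightarrow> ('i \<Rightarrow> ('g, 'b) monoid_scheme) \<Rightarrow> 'i set \<Rightarrow> ('i \<Rightarrow> 'g) \<Rightarrow> ('i \<Rightarrow> 'g) \<Rightarrow> int" where
  "UU I G K g x = (\<Sum>L\<in>Pow K. (-1::int) ^ card (K-L) * (if x = extp I G L g then 1 else 0))"

definition hh :: "('a, 'c) monoid_scheme \<Rightarrow> int \<Rightarrow> 'a \<Rightarrow> 'a \<Rightarrow> int" where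
  "hh P c y = (\<lambda>w. c * ((if w = y then 1 else 0) - (if w = \<one>\<^bsub>P\<^esub> then 1 else 0)))"

lemma (in group) conv:
  assumes "a \<in> carrier (group_ring G)" "y \<in> carrier G" "x \<in> carrier G"
  shows "(a \<otimes>\<^bsub>group_ring G\<^esub> hh G c y) x = c * (a (x \<otimes>\<^bsub>G\<^esub> inv\<^bsub>G\<^esub> y) - a x)"
proof -
  have fs: "finite (fsupp a)" "fsupp a \<subseteq> carrier G" using assms(1) by (auto simp: group_ring_def)
  have a0: "\<And>z. z \<notin> fsupp a \<Longrightarrow> a z = 0" by (auto simp: fsupp_def)
  have "(a \<otimes>\<^bsub>group_ring G\<^esub> hh G c y) x = (\<Sum>z\<in>fsupp a. a z * hh G c y (inv z \<otimes> x))"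
    using assms(3) by (simp add: group_ring_def)
  also have "\<dots> = (\<Sum>z\<in>fsupp a. c * ((if z = x \<otimes> inv y then a z else 0) - (if z = x then a z else 0)))"
  proof (rule sum.cong[OF refl])
    fix z assume z: "z \<in> fsupp a"
    hence zc: "z \<in> carrier G" using fs by auto
    have e1: "inv z \<otimes> x = y \<longleftrightarrow> z = x \<otimes> inv y"
      using zc assms(2,3) by (metis inv_closed inv_inv inv_solve_left' inv_solve_right)
    have e2: "inv z \<otimes> x = \<one> \<longleftrightarrow> z = x"
      using zc assms(2,3) by (metis inv_closed inv_inv inv_equality l_inv)
    show "a z * hh G c y (inv z \<otimes> x) = c * ((if z = x \<otimes> inv y then a z else 0) - (if z = x then a z else 0))"
      unfolding hh_def using e1 e2 by (auto simp: algebra_simps)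
  qed
  also have "\<dots> = c * ((\<Sum>z\<in>fsupp a. if z = x \<otimes> inv y then a z else 0) - (\<Sum>z\<in>fsupp a. if z = x then a z else 0))"
    by (simp only: sum_subtractf[symmetric] sum_distrib_left)
  also have "\<dots> = c * (a (x \<otimes> inv y) - a x)"
    using fs(1) by (simp add: sum.delta' a0)
  finally show ?thesis .
qed

lemma aug_sum:
  assumes "finite S" "fsupp f \<subseteq> S"
  shows "augmentation f = (\<Sum>x\<in>S. f x)"
  unfolding augmentation_def
  by (rule sum.mono_neutral_left) (use assms in \<open>auto simp: fsupp_def\<close>)

lemma (in group) hh_D:
  assumes "y \<in> carrier G"
  shows "hh G c y \<in> aug_ideal G"
proof -
  have sub: "fsupp (hh G c y) \<subseteq> {y, \<one>}" by (auto simp: fsupp_def hh_def)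
  hence "finite (fsupp (hh G c y))" by (rule finite_subset) auto
  moreover have "augmentation (hh G c y) = 0"
    proof (cases "y = \<one>")
    case True thus ?thesis by (subst aug_sum[OF _ sub]) (auto simp: hh_def)
  next
    case False thus ?thesis by (subst aug_sum[OF _ sub]) (auto simp: hh_def)
  qed
  ultimately show ?thesis using sub assms(1)
    unfolding aug_ideal_def group_ring_def by auto
qed


context
  fixes I :: "'i set" and G :: "'i \<Rightarrow> ('g, 'b) monoid_scheme"
  assumes finI: "finite I" and grp: "\<And>i. i \<in> I \<Longrightarrow> group (G i)"
begin

lemma grpP: "group (product_group I G)" using grp by simp

lemma one_G: "i \<in> I \<Longrightarrow> \<one>\<^bsub>G i\<^esub> \<in> carrier (G i)"
  using grp by (simp add: group.is_monoid monoid.one_closed)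

lemma extp_carrier: "g \<in> carrier (product_group I G) \<Longrightarrow> extp I G L g \<in> carrier (product_group I G)"
  using one_G by (auto simp: extp_def PiE_def Pi_def)

lemma extp_mult:
  assumes "g \<in> carrier (product_group I G)" "k \<notin> L"
  shows "extp I G L g \<otimes>\<^bsub>product_group I G\<^esub> extp I G {k} g = extp I G (insert k L) g"
proof -
  have "\<And>i. i \<in> I \<Longrightarrow> g i \<in> carrier (G i)" using assms(1) by auto
  thus ?thesis using assms(2) grp one_G
    by (auto simp: extp_def fun_eq_iff group.is_monoid monoid.r_one monoid.l_one)
qed

lemma extp_I: "g \<in> carrier (product_group I G) \<Longrightarrow> extp I G I g = g"
  by (auto simp: extp_def fun_eq_iff PiE_def extensional_def)

lemma extp_eq:
  assumes "g \<in> carrier (product_group I G)" "g0 \<in> carrier (product_group I G)" "L \<subseteq> I"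
  shows "extp I G L g = extp I G L g0 \<longleftrightarrow> restrict g L = restrict g0 L"
proof
  assume eq: "extp I G L g = extp I G L g0"
  show "restrict g L = restrict g0 L"
  proof
    fix i show "restrict g L i = restrict g0 L i"
    proof (cases "i \<in> L")
      case True
      hence iI: "i \<in> I" using assms(3) by blast
      have "extp I G L g i = extp I G L g0 i" using eq by simp
      thus ?thesis using True iI by (simp add: extp_def)
    qed simp
  qed
next
  assume eq: "restrict g L = restrict g0 L"
  have gi: "g i = g0 i" if "i \<in> L" for i
  proof -
    have "restrict g L i = restrict g0 L i" using eq by simp
    thus ?thesis using that by simp
  qed
  show "extp I G L g = extp I G L g0" unfolding extp_def
    by (rule ext) (simp add: gi)
qed

lemma UU_out:
  assumes "g \<in> carrier (product_group I G)" "x \<notin> carrier (product_group I G)"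
  shows "UU I G K g x = 0"
proof -
  have "\<And>L. x \<noteq> extp I G L g" using extp_carrier[OF assms(1)] assms(2) by metis
  thus ?thesis by (simp add: UU_def)
qed

lemma sum_Pow_insert:
  assumes "finite K" "k \<notin> K"
  shows "(\<Sum>L\<in>Pow (insert k K). F L) = (\<Sum>L\<in>Pow K. F L) + (\<Sum>L\<in>Pow K. F (insert k L))"
proof -
  have "Pow (insert k K) = Pow K \<union> insert k ` Pow K" by (rule Pow_insert)
  moreover have "Pow K \<inter> insert k ` Pow K = {}" using assms(2) by auto
  moreover have "inj_on (insert k) (Pow K)" using assms(2) unfolding inj_on_def by (metis Diff_insert_absorb PowD subsetD)
  ultimately show ?thesis using assms(1)
    by (simp add: sum.union_disjoint sum.reindex)
qed

lemma UU_trans: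
  assumes "finite K" "k \<notin> K" "g \<in> carrier (product_group I G)" "x \<in> carrier (product_group I G)"
  shows "UU I G (insert k K) g x
     = UU I G K g (x \<otimes>\<^bsub>product_group I G\<^esub> inv\<^bsub>product_group I G\<^esub> extp I G {k} g) - UU I G K g x"
proof -
  interpret P: group "product_group I G" by (rule grpP)
  let ?y = "extp I G {k} g"
  have yc: "?y \<in> carrier (product_group I G)" by (rule extp_carrier[OF assms(3)])
  have e: "x \<otimes>\<^bsub>product_group I G\<^esub> inv\<^bsub>product_group I G\<^esub> ?y = extp I G L g \<longleftrightarrow> x = extp I G (insert k L) g"
    if "L \<subseteq> K" for L
  proof -
    have "k \<notin> L" using that assms(2) by auto
    thus ?thesis using P.inv_solve_right'[OF extp_carrier[OF assms(3)] assms(4) yc, of L]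
      extp_mult[OF assms(3)] by simp
  qed
  have c1: "card (insert k K - L) = Suc (card (K - L))" if "L \<subseteq> K" for L
  proof -
    have "insert k K - L = insert k (K - L)" using that assms(2) by auto
    thus ?thesis using assms by simp
  qed
  have c2: "insert k K - insert k L = K - L" for L using assms(2) by auto
  have "UU I G (insert k K) g x = (\<Sum>L\<in>Pow K. (-1::int) ^ card (insert k K - L) * (if x = extp I G L g then 1 else 0))
     + (\<Sum>L\<in>Pow K. (-1::int) ^ card (insert k K - insert k L) * (if x = extp I G (insert k L) g then 1 else 0))"
    unfolding UU_def by (rule sum_Pow_insert[OF assms(1,2)])
  also have "\<dots> = - UU I G K g x + UU I G K g (x \<otimes>\<^bsub>product_group I G\<^esub> inv\<^bsub>product_group I G\<^esub> ?y)"
  proof -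
    have t1: "(\<Sum>L\<in>Pow K. (-1::int) ^ card (insert k K - L) * (if x = extp I G L g then 1 else 0)) = - UU I G K g x"
      unfolding UU_def sum_negf[symmetric]
      by (rule sum.cong[OF refl]) (simp add: c1)
    have t2: "(\<Sum>L\<in>Pow K. (-1::int) ^ card (insert k K - insert k L) * (if x = extp I G (insert k L) g then 1 else 0))
       = UU I G K g (x \<otimes>\<^bsub>product_group I G\<^esub> inv\<^bsub>product_group I G\<^esub> ?y)"
      unfolding UU_def c2
    proof (rule sum.cong[OF refl])
      fix L assume "L \<in> Pow K"
      hence LK: "L \<subseteq> K" by auto
      show "(-1::int) ^ card (K - L) * (if x = extp I G (insert k L) g then 1 else 0) =
        (-1::int) ^ card (K - L) * (if x \<otimes>\<^bsub>product_group I G\<^esub> inv\<^bsub>product_group I G\<^esub> ?y = extp I G L g then 1 else 0)"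
        by (simp only: e[OF LK])
    qed
    show ?thesis using t1 t2 by simp
  qed
  finally show ?thesis by simp
qed


lemma UU_carrier:
  assumes "finite K" "g \<in> carrier (product_group I G)"
  shows "(\<lambda>x. c * UU I G K g x) \<in> carrier (group_ring (product_group I G))"
proof -
  have sub: "fsupp (\<lambda>x. c * UU I G K g x) \<subseteq> (\<lambda>L. extp I G L g) ` Pow K"
  proof
    fix x assume x: "x \<in> fsupp (\<lambda>x. c * UU I G K g x)"
    show "x \<in> (\<lambda>L. extp I G L g) ` Pow K"
    proof (rule ccontr)
      assume "x \<notin> (\<lambda>L. extp I G L g) ` Pow K"
      hence "UU I G K g x = 0" unfolding UU_def by (intro sum.neutral) auto
      thus False using x by (simp add: fsupp_def)
    qed
  qed
  have "finite (fsupp (\<lambda>x. c * UU I G K g x))"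
    by (rule finite_subset[OF sub]) (use assms in auto)
  moreover have "fsupp (\<lambda>x. c * UU I G K g x) \<subseteq> carrier (product_group I G)"
    using sub extp_carrier[OF assms(2)] by blast
  ultimately show ?thesis by (simp add: group_ring_def)
qed

lemma UU_conv:
  assumes "finite K" "k \<notin> K" "g \<in> carrier (product_group I G)"
  shows "UU I G K g \<otimes>\<^bsub>group_ring (product_group I G)\<^esub> hh (product_group I G) c (extp I G {k} g)
       = (\<lambda>x. c * UU I G (insert k K) g x)"
proof
  fix x
  show "(UU I G K g \<otimes>\<^bsub>group_ring (product_group I G)\<^esub> hh (product_group I G) c (extp I G {k} g)) x
       = c * UU I G (insert k K) g x"
  proof (cases "x \<in> carrier (product_group I G)")
    case True
    have uc: "UU I G K g \<in> carrier (group_ring (product_group I G))"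
      using UU_carrier[OF assms(1,3), of 1] by simp
    show ?thesis
      using group.conv[OF grpP uc extp_carrier[OF assms(3)] True, of c]
        UU_trans[OF assms(1,2,3) True] by simp
  next
    case False
    thus ?thesis using UU_out[OF assms(3) False] by (simp add: group_ring_def)
  qed
qed

abbreviation "RR \<equiv> group_ring (product_group I G)"
abbreviation "DD \<equiv> aug_ideal (product_group I G)"

lemma zero_in: "(\<lambda>x. 0) \<in> ideal_pow RR DD n"
proof (induction n)
  case 0
  show ?case by (simp add: group_ring_def fsupp_def)
next
  case (Suc n)
  have z: "(\<lambda>x. 0::int) \<in> DD"
    by (simp add: aug_ideal_def group_ring_def fsupp_def augmentation_def)
  have "(\<lambda>x. 0::int) \<otimes>\<^bsub>RR\<^esub> (\<lambda>x. 0) \<in> ideal_prod RR (ideal_pow RR DD n) DD"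
    by (rule ideal_prod.prod[OF Suc z])
  moreover have "(\<lambda>x. 0::int) \<otimes>\<^bsub>RR\<^esub> (\<lambda>x. 0) = (\<lambda>x. 0)"
    by (simp add: group_ring_def fsupp_def fun_eq_iff)
  ultimately show ?case by simp
qed

lemma add_in:
  assumes "a \<in> ideal_pow RR DD n" "b \<in> ideal_pow RR DD n"
  shows "a + b \<in> ideal_pow RR DD n"
proof (cases n)
  case 0
  have "fsupp (a + b) \<subseteq> fsupp a \<union> fsupp b" by (auto simp: fsupp_def)
  thus ?thesis using assms 0 by (auto simp: group_ring_def intro: finite_subset)
next
  case (Suc m)
  have "a \<oplus>\<^bsub>RR\<^esub> b \<in> ideal_prod RR (ideal_pow RR DD m) DD"
    by (rule ideal_prod.sum) (use assms Suc in simp_all)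
  moreover have "a \<oplus>\<^bsub>RR\<^esub> b = a + b" by (simp add: group_ring_def fun_eq_iff)
  ultimately show ?thesis using Suc by simp
qed

lemma sum_in:
  assumes "finite A" "\<And>a. a \<in> A \<Longrightarrow> F a \<in> ideal_pow RR DD n"
  shows "(\<Sum>a\<in>A. F a) \<in> ideal_pow RR DD n"
  using assms
proof (induction A rule: finite_induct)
  case empty
  show ?case using zero_in by (simp add: zero_fun_def)
next
  case (insert a A)
  show ?case unfolding sum.insert[OF insert.hyps] by (rule add_in) (use insert in auto)
qed

lemma UU_ideal:
  assumes "g \<in> carrier (product_group I G)"
  shows "finite K \<Longrightarrow> n \<le> card K \<Longrightarrow> (\<lambda>x. c * UU I G K g x) \<in> ideal_pow RR DD n"
proof (induction n arbitrary: K c)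
  case 0
  thus ?case using UU_carrier[OF _ assms] by simp
next
  case (Suc n)
  then obtain k where k: "k \<in> K" by fastforce
  let ?K = "K - {k}"
  have fK: "finite ?K" using Suc by simp
  have cK: "n \<le> card ?K" using Suc k by simp
  have kK: "k \<notin> ?K" by simp
  have Keq: "insert k ?K = K" using k by auto
  have ih: "UU I G ?K g \<in> ideal_pow RR DD n"
    using Suc.IH[OF fK cK, of 1] by simp
  have h: "hh (product_group I G) c (extp I G {k} g) \<in> DD"
    by (rule group.hh_D[OF grpP extp_carrier[OF assms]])
  have "UU I G ?K g \<otimes>\<^bsub>RR\<^esub> hh (product_group I G) c (extp I G {k} g) \<in> ideal_prod RR (ideal_pow RR DD n) DD"
    by (rule ideal_prod.prod[OF ih h])
  thus ?case using UU_conv[OF fK kK assms, of c] Keq by simp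
qed


lemma vanish_L:
  assumes f: "f \<in> carrier RR" and L: "L \<subseteq> I"
    and ker: "f \<in> a_kernel RR (group_ring (product_group L G)) (induced_map (proj L))"
  shows "(\<Sum>g\<in>fsupp f. f g * (if x = extp I G L g then 1 else 0)) = 0"
proof -
  have fs: "finite (fsupp f)" "fsupp f \<subseteq> carrier (product_group I G)"
    using f by (auto simp: group_ring_def)
  have im: "induced_map (proj L) f y = 0" for y
    using ker by (simp add: a_kernel_def' group_ring_def)
  have "(\<Sum>g\<in>fsupp f. f g * (if x = extp I G L g then 1 else 0))
      = (\<Sum>g\<in>{g\<in>fsupp f. extp I G L g = x}. f g)"
    using fs(1) by (auto simp: sum.inter_filter intro: sum.cong)
  also have "\<dots> = 0"
  proof (cases "{g\<in>fsupp f. extp I G L g = x} = {}")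
    case True thus ?thesis by (simp only: True sum.empty)
  next
    case False
    then obtain g0 where g0: "g0 \<in> fsupp f" "extp I G L g0 = x" by auto
    have "{g\<in>fsupp f. extp I G L g = x} = {g\<in>fsupp f. proj L g = restrict g0 L}"
      using extp_eq[OF _ _ L] fs(2) g0 by (auto simp: proj_def)
    thus ?thesis using im[of "restrict g0 L"] by (simp add: induced_map_def)
  qed
  finally show ?thesis .
qed

lemma vanish_K:
  assumes f: "f \<in> carrier RR" and K: "K \<subseteq> I" "card K < s"
    and ker: "\<And>J. J \<subseteq> I \<Longrightarrow> card J < s \<Longrightarrow> f \<in> a_kernel RR (group_ring (product_group J G)) (induced_map (proj J))"
  shows "(\<Sum>g\<in>fsupp f. f g * UU I G K g x) = 0"
proof -
  have fK: "finite K" using K(1) finI by (auto intro: finite_subset)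
  have "(\<Sum>g\<in>fsupp f. f g * UU I G K g x)
     = (\<Sum>L\<in>Pow K. (-1::int) ^ card (K - L) * (\<Sum>g\<in>fsupp f. f g * (if x = extp I G L g then 1 else 0)))"
    unfolding UU_def sum_distrib_left
    by (subst sum.swap) (simp add: algebra_simps)
  also have "\<dots> = 0"
  proof (rule sum.neutral, rule ballI)
    fix L assume "L \<in> Pow K"
    hence LK: "L \<subseteq> K" by auto
    hence "card L \<le> card K" using fK by (rule card_mono[rotated])
    hence "card L < s" using K by simp
    moreover have "L \<subseteq> I" using LK K by auto
    ultimately show "(-1::int) ^ card (K - L) * (\<Sum>g\<in>fsupp f. f g * (if x = extp I G L g then 1 else 0)) = 0"
      using vanish_L[OF f _ ker] by simp
  qed
  finally show ?thesis .
qed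

lemma moebius:
  assumes g: "g \<in> carrier (product_group I G)"
  shows "finite A \<Longrightarrow> (\<Sum>K\<in>Pow A. UU I G K g x) = (if x = extp I G A g then 1 else 0)"
proof (induction A arbitrary: x rule: finite_induct)
  case empty
  show ?case by (simp add: UU_def)
next
  case (insert k A)
  interpret P: group "product_group I G" by (rule grpP)
  let ?y = "extp I G {k} g"
  have yc: "?y \<in> carrier (product_group I G)" by (rule extp_carrier[OF g])
  have "(\<Sum>K\<in>Pow (insert k A). UU I G K g x) = (\<Sum>K\<in>Pow A. UU I G K g x) + (\<Sum>K\<in>Pow A. UU I G (insert k K) g x)"
    by (rule sum_Pow_insert[OF insert.hyps])
  also have "\<dots> = (if x = extp I G (insert k A) g then 1 else 0)"
  proof (cases "x \<in> carrier (product_group I G)")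
    case True
    have "(\<Sum>K\<in>Pow A. UU I G (insert k K) g x)
        = (\<Sum>K\<in>Pow A. UU I G K g (x \<otimes>\<^bsub>product_group I G\<^esub> inv\<^bsub>product_group I G\<^esub> ?y) - UU I G K g x)"
    proof (rule sum.cong[OF refl])
      fix K assume "K \<in> Pow A"
      hence "finite K" "k \<notin> K" using insert.hyps by (auto intro: finite_subset)
      thus "UU I G (insert k K) g x = UU I G K g (x \<otimes>\<^bsub>product_group I G\<^esub> inv\<^bsub>product_group I G\<^esub> ?y) - UU I G K g x"
        by (rule UU_trans[OF _ _ g True])
    qed
    hence "(\<Sum>K\<in>Pow A. UU I G K g x) + (\<Sum>K\<in>Pow A. UU I G (insert k K) g x)
       = (\<Sum>K\<in>Pow A. UU I G K g (x \<otimes>\<^bsub>product_group I G\<^esub> inv\<^bsub>product_group I G\<^esub> ?y))"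
      by (simp add: sum_subtractf)
    also have "\<dots> = (if x \<otimes>\<^bsub>product_group I G\<^esub> inv\<^bsub>product_group I G\<^esub> ?y = extp I G A g then 1 else 0)"
      by (rule insert.IH)
    also have "\<dots> = (if x = extp I G (insert k A) g then 1 else 0)"
      using P.inv_solve_right'[OF extp_carrier[OF g] True yc, of A] extp_mult[OF g insert.hyps(2)]
      by (simp only:)
    finally show ?thesis .
  next
    case False
    have "x \<noteq> extp I G (insert k A) g" using False extp_carrier[OF g] by metis
    thus ?thesis using UU_out[OF g False] by simp
  qed
  finally show ?case .
qed

lemma sum_app: "(sum F A) x = (\<Sum>a\<in>A. F a x)"
  by (induction A rule: infinite_finite_induct) auto

lemma decomp:
  assumes f: "f \<in> carrier RR"
    and ker: "\<And>J. J \<subseteq> I \<Longrightarrow> card J < s \<Longrightarrow> f \<in> a_kernel RR (group_ring (product_group J G)) (induced_map (proj J))"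
  shows "f = (\<Sum>K\<in>{K\<in>Pow I. s \<le> card K}. \<Sum>g\<in>fsupp f. (\<lambda>x. f g * UU I G K g x))"
proof
  fix x
  have fs: "finite (fsupp f)" "fsupp f \<subseteq> carrier (product_group I G)"
    using f by (auto simp: group_ring_def)
  have "f x = (\<Sum>g\<in>fsupp f. if g = x then f g else 0)"
    using fs(1) by (simp add: sum.delta fsupp_def)
  also have "\<dots> = (\<Sum>g\<in>fsupp f. f g * (\<Sum>K\<in>Pow I. UU I G K g x))"
  proof (rule sum.cong[OF refl])
    fix g assume "g \<in> fsupp f"
    hence gc: "g \<in> carrier (product_group I G)" using fs by auto
    show "(if g = x then f g else 0) = f g * (\<Sum>K\<in>Pow I. UU I G K g x)"
      using moebius[OF gc finI, of x] extp_I[OF gc] by auto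
  qed
  also have "\<dots> = (\<Sum>K\<in>Pow I. \<Sum>g\<in>fsupp f. f g * UU I G K g x)"
    unfolding sum_distrib_left by (rule sum.swap)
  also have "\<dots> = (\<Sum>K\<in>{K\<in>Pow I. s \<le> card K}. \<Sum>g\<in>fsupp f. f g * UU I G K g x)"
  proof (rule sum.mono_neutral_right)
    show "finite (Pow I)" using finI by simp
    show "{K \<in> Pow I. s \<le> card K} \<subseteq> Pow I" by auto
    show "\<forall>K\<in>Pow I - {K \<in> Pow I. s \<le> card K}. (\<Sum>g\<in>fsupp f. f g * UU I G K g x) = 0"
      using vanish_K[where s=s, OF f _ _ ker] by auto
  qed
  finally show "f x = (\<Sum>K\<in>{K\<in>Pow I. s \<le> card K}. \<Sum>g\<in>fsupp f. (\<lambda>x. f g * UU I G K g x)) x"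
    by (simp add: sum_app)
qed

end

theorem mainTheorem4:
  fixes G :: "'i \<Rightarrow> ('g, 'b) monoid_scheme" and I :: "'i set" and s :: nat
  assumes "finite I"
    and "\<And>i. i \<in> I \<Longrightarrow> group (G i)"
  shows "carrier (group_ring (product_group I G)) \<inter> (\<Inter>J \<in> {J. J \<subseteq> I \<and> card J < s}.
            a_kernel (group_ring (product_group I G)) (group_ring (product_group J G))
                     (induced_map (proj J)))
         \<subseteq> ideal_pow (group_ring (product_group I G)) (aug_ideal (product_group I G)) s"
proof
  fix f assume fA: "f \<in> carrier (group_ring (product_group I G)) \<inter> (\<Inter>J \<in> {J. J \<subseteq> I \<and> card J < s}.
            a_kernel (group_ring (product_group I G)) (group_ring (product_group J G))
                     (induced_map (proj J)))"
  hence f: "f \<in> carrier (group_ring (product_group I G))" by simp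
  have fB: "f \<in> (\<Inter>J \<in> {J. J \<subseteq> I \<and> card J < s}.
            a_kernel (group_ring (product_group I G)) (group_ring (product_group J G))
                     (induced_map (proj J)))" using fA by (rule IntD2)
  have ker: "f \<in> a_kernel (group_ring (product_group I G)) (group_ring (product_group J G)) (induced_map (proj J))"
    if "J \<subseteq> I" "card J < s" for J
    by (rule INT_D[OF fB]) (use that in simp)
  have fs: "finite (fsupp f)" "fsupp f \<subseteq> carrier (product_group I G)"
    using f by (auto simp: group_ring_def)
  have mem: "(\<Sum>K\<in>{K\<in>Pow I. s \<le> card K}. \<Sum>g\<in>fsupp f. (\<lambda>x. f g * UU I G K g x))
      \<in> ideal_pow (group_ring (product_group I G)) (aug_ideal (product_group I G)) s"
  proof (rule sum_in[OF assms])
    show "finite {K\<in>Pow I. s \<le> card K}" using assms(1) by simp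
    fix K assume K: "K \<in> {K\<in>Pow I. s \<le> card K}"
    hence fK: "finite K" using assms(1) by (auto intro: finite_subset)
    show "(\<Sum>g\<in>fsupp f. (\<lambda>x. f g * UU I G K g x))
      \<in> ideal_pow (group_ring (product_group I G)) (aug_ideal (product_group I G)) s"
    proof (rule sum_in[OF assms fs(1)])
      fix g assume "g \<in> fsupp f"
      hence "g \<in> carrier (product_group I G)" using fs by auto
      thus "(\<lambda>x. f g * UU I G K g x) \<in> ideal_pow (group_ring (product_group I G)) (aug_ideal (product_group I G)) s"
        using UU_ideal[OF assms, where g=g and K=K and n=s and c="f g"] fK K by simp
    qed
  qed
  show "f \<in> ideal_pow (group_ring (product_group I G)) (aug_ideal (product_group I G)) s"
  proof -
    have feq: "f = (\<Sum>K\<in>{K\<in>Pow I. s \<le> card K}. \<Sum>g\<in>fsupp f. (\<lambda>x. f g * UU I G K g x))"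
      by (rule decomp[where I=I and G=G and f=f and s=s]) (auto intro: assms f ker)
    show ?thesis by (subst feq) (rule mem)
  qed
qed

end
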